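(* For every sufficiently large natural number $n$ and every natural number $\alpha$, there exists a set $B \subseteq \{0,1\}^n$ with $|B| \leq (2n^{13} + n^{12})\cdot 2^{\alpha}$ such that every string $y \in \{0,1\}^n$ is $\alpha$-dependent with some string $x \in B$.
   Context: $C(x)$ denotes the plain Kolmogorov complexity of the binary string $x$ with respect to a fixed universal Turing machine; $C(x \mid y)$ denotes the conditional plain Kolmogorov complexity of $x$ given $y$ with respect to a fixed universal conditional machine. A string $y$ is said to have $\alpha$-dependency with (be $\alpha$-dependent with) a string $x$ if $C(y) - C(y \mid x) \geq \alpha$ or $x = y$. *)

theory Defs
  imports Main
begin

datatype recf = Zero | Succ | Proj nat | Comp recf "recf list" | Prim recf recf | Mu recf

lemma list_all2_mono_pred [mono]:
  "(\<And>x y. P x y \<longrightarrow> Q x y) \<Longrightarrow> list_all2 P xs ys \<longrightarrow> list_all2 Q xs ys"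
  by (simp add: list_all2_mono)

inductive eval :: "recf \<Rightarrow> nat list \<Rightarrow> nat \<Rightarrow> bool" where
  eval_zero: "eval Zero xs 0"
| eval_succ: "eval Succ (x # xs) (Suc x)"
| eval_proj: "i < length xs \<Longrightarrow> eval (Proj i) xs (xs ! i)"
| eval_comp: "list_all2 (\<lambda>g y. eval g xs y) gs ys \<Longrightarrow> eval f ys z \<Longrightarrow> eval (Comp f gs) xs z"
| eval_prim0: "eval f xs z \<Longrightarrow> eval (Prim f g) (0 # xs) z"
| eval_primS: "eval (Prim f g) (n # xs) y \<Longrightarrow> eval g (y # n # xs) z \<Longrightarrow>
               eval (Prim f g) (Suc n # xs) z"
| eval_mu: "eval f (n # xs) 0 \<Longrightarrow> (\<forall>m<n. \<exists>k. k \<noteq> 0 \<and> eval f (m # xs) k) \<Longrightarrow>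
            eval (Mu f) xs n"

text \<open>Bijective encoding of binary strings as natural numbers.\<close>
fun enc :: "bool list \<Rightarrow> nat" where
  "enc [] = 0"
| "enc (b # bs) = 2 * enc bs + (if b then 2 else 1)"

definition computable1 :: "(bool list \<Rightarrow> bool list option) \<Rightarrow> bool" where
  "computable1 F \<longleftrightarrow> (\<exists>r. \<forall>p z. eval r [enc p] (enc z) \<longleftrightarrow> F p = Some z)"

definition computable2 :: "(bool list \<Rightarrow> bool list \<Rightarrow> bool list option) \<Rightarrow> bool" where
  "computable2 F \<longleftrightarrow> (\<exists>r. \<forall>p y z. eval r [enc p, enc y] (enc z) \<longleftrightarrow> F p y = Some z)"

definition universal1 :: "(bool list \<Rightarrow> bool list option) \<Rightarrow> bool" where
  "universal1 U \<longleftrightarrow> computable1 U \<and>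
     (\<forall>F. computable1 F \<longrightarrow> (\<exists>c::nat. \<forall>p x. F p = Some x \<longrightarrow>
         (\<exists>q. U q = Some x \<and> length q \<le> length p + c)))"

definition universal2 :: "(bool list \<Rightarrow> bool list \<Rightarrow> bool list option) \<Rightarrow> bool" where
  "universal2 V \<longleftrightarrow> computable2 V \<and>
     (\<forall>F. computable2 F \<longrightarrow> (\<exists>c::nat. \<forall>p y x. F p y = Some x \<longrightarrow>
         (\<exists>q. V q y = Some x \<and> length q \<le> length p + c)))"

definition KC :: "(bool list \<Rightarrow> bool list option) \<Rightarrow> bool list \<Rightarrow> nat" where
  "KC U x = (LEAST k. \<exists>p. length p = k \<and> U p = Some x)"

definition KCc :: "(bool list \<Rightarrow> bool list \<Rightarrow> bool list option) \<Rightarrow> bool list \<Rightarrow> bool list \<Rightarrow> nat" where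
  "KCc V x y = (LEAST k. \<exists>p. length p = k \<and> V p y = Some x)"

definition dependent :: "(bool list \<Rightarrow> bool list option) \<Rightarrow> (bool list \<Rightarrow> bool list \<Rightarrow> bool list option)
    \<Rightarrow> nat \<Rightarrow> bool list \<Rightarrow> bool list \<Rightarrow> bool" where
  "dependent U V \<alpha> y x \<longleftrightarrow> int (KC U y) - int (KCc V y x) \<ge> int \<alpha> \<or> x = y"

end

theory Submission
  imports Defs
begin

inductive_cases evZ: "eval Zero xs z"
inductive_cases evS: "eval Succ xs z"
inductive_cases evP: "eval (Proj i) xs z"
inductive_cases evC: "eval (Comp f gs) xs z"
inductive_cases evPr: "eval (Prim f g) xs z"

definition computes :: "recf \<Rightarrow> nat \<Rightarrow> (nat list \<Rightarrow> nat) \<Rightarrow> bool" where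
  "computes r n f \<longleftrightarrow> (\<forall>xs z. length xs = n \<longrightarrow> (eval r xs z \<longleftrightarrow> z = f xs))"

lemma c_eq: "computes r n f \<Longrightarrow> (\<And>xs. length xs = n \<Longrightarrow> f xs = g xs) \<Longrightarrow> computes r n g"
  by (simp add: computes_def)

lemma c_zero: "computes Zero n (\<lambda>_. 0)"
  by (auto simp: computes_def intro: eval_zero elim: evZ)

lemma c_succ: "computes Succ (Suc n) (\<lambda>xs. Suc (hd xs))"
  unfolding computes_def
proof (intro allI impI)
  fix xs :: "nat list" and z assume "length xs = Suc n"
  then obtain a ys where xs: "xs = a # ys" by (cases xs) auto
  show "eval Succ xs z = (z = Suc (hd xs))"
    unfolding xs by (auto intro: eval_succ elim: evS)
qed

lemma c_proj: "i < n \<Longrightarrow> computes (Proj i) n (\<lambda>xs. xs ! i)"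
  by (auto simp: computes_def intro: eval_proj elim: evP)

lemma c_list: "list_all2 (\<lambda>g h. computes g n h) gs hs \<Longrightarrow> length xs = n \<Longrightarrow>
   list_all2 (\<lambda>g y. eval g xs y) gs ys \<longleftrightarrow> ys = map (\<lambda>h. h xs) hs"
proof (induction gs hs arbitrary: ys rule: list_all2_induct)
  case Nil then show ?case by simp
next
  case (Cons g gs h hs)
  then show ?case by (cases ys) (auto simp: computes_def)
qed

lemma c_comp: assumes f0: "computes f (length gs) fo" and l: "list_all2 (\<lambda>g h. computes g n h) gs hs"
  shows "computes (Comp f gs) n (\<lambda>xs. fo (map (\<lambda>h. h xs) hs))"
  unfolding computes_def
proof (intro allI impI)
  fix xs :: "nat list" and z :: nat assume n: "length xs = n"
  have f: "\<forall>xs z. length xs = length gs \<longrightarrow> eval f xs z = (z = fo xs)" using f0 by (simp add: computes_def)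
  have L: "list_all2 (\<lambda>g y. eval g xs y) gs ys \<longleftrightarrow> ys = map (\<lambda>h. h xs) hs" for ys
    using c_list[OF l n] .
  have len: "length (map (\<lambda>h. h xs) hs) = length gs" using l by (simp add: list_all2_lengthD)
  show "eval (Comp f gs) xs z = (z = fo (map (\<lambda>h. h xs) hs))"
  proof
    assume "eval (Comp f gs) xs z"
    then show "z = fo (map (\<lambda>h. h xs) hs)" using L f len by (auto elim: evC)
  next
    assume "z = fo (map (\<lambda>h. h xs) hs)"
    then show "eval (Comp f gs) xs z" using L f len by (auto intro: eval_comp)
  qed
qed

lemma c_comp1: "computes f 1 fo \<Longrightarrow> computes g1 n h1 \<Longrightarrow> computes (Comp f [g1]) n (\<lambda>xs. fo [h1 xs])"
  using c_comp[of f "[g1]" fo n "[h1]"] by simp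

lemma c_comp2: "computes f 2 fo \<Longrightarrow> computes g1 n h1 \<Longrightarrow> computes g2 n h2 \<Longrightarrow>
   computes (Comp f [g1, g2]) n (\<lambda>xs. fo [h1 xs, h2 xs])"
  using c_comp[of f "[g1,g2]" fo n "[h1,h2]"] by (simp add: numeral_2_eq_2)

lemma c_prim: "computes f n fo \<Longrightarrow> computes g (Suc (Suc n)) go \<Longrightarrow>
  computes (Prim f g) (Suc n) (\<lambda>xs. rec_nat (fo (tl xs)) (\<lambda>k y. go (y # k # tl xs)) (hd xs))"
  unfolding computes_def
proof (intro allI impI)
  fix xs :: "nat list" and z :: nat assume f: "\<forall>xs z. length xs = n \<longrightarrow> eval f xs z = (z = fo xs)"
    and g: "\<forall>xs z. length xs = Suc (Suc n) \<longrightarrow> eval g xs z = (z = go xs)"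
    and l: "length xs = Suc n"
  then obtain k :: nat and ys where xs: "xs = k # ys" and ly: "length ys = n" by (cases xs) auto
  have "\<forall>z. eval (Prim f g) (k # ys) z = (z = rec_nat (fo ys) (\<lambda>k y. go (y # k # ys)) k)"
  proof (induction k)
    case 0
    show ?case
    proof (intro allI iffI)
      fix z assume "eval (Prim f g) (0 # ys) z"
      then show "z = rec_nat (fo ys) (\<lambda>k y. go (y # k # ys)) 0" using f ly
        by (auto elim: evPr)
    next
      fix z assume "z = rec_nat (fo ys) (\<lambda>k y. go (y # k # ys)) 0"
      then show "eval (Prim f g) (0 # ys) z" using f ly by (auto intro: eval_prim0)
    qed
  next
    case (Suc k)
    show ?case
    proof (intro allI iffI)
      fix z assume "eval (Prim f g) (Suc k # ys) z"
      then show "z = rec_nat (fo ys) (\<lambda>k y. go (y # k # ys)) (Suc k)" using Suc g ly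
        by (auto elim: evPr)
    next
      fix z assume "z = rec_nat (fo ys) (\<lambda>k y. go (y # k # ys)) (Suc k)"
      then show "eval (Prim f g) (Suc k # ys) z" using Suc g ly by (auto intro: eval_primS)
    qed
  qed
  then show "eval (Prim f g) xs z = (z = rec_nat (fo (tl xs)) (\<lambda>k y. go (y # k # tl xs)) (hd xs))"
    using xs by simp
qed


lemma len2: "length xs = 2 \<Longrightarrow> \<exists>a b. xs = [a, b]"
  by (cases xs; cases "tl xs") (auto simp: numeral_2_eq_2)
lemma len1: "length xs = 1 \<Longrightarrow> \<exists>a. xs = [a]"
  by (cases xs) auto

lemma c_eq2: "computes r n f \<Longrightarrow> n = m \<Longrightarrow> (\<And>xs. length xs = m \<Longrightarrow> f xs = g xs) \<Longrightarrow> computes r m g"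
  by (simp add: computes_def)

lemma c_two: "computes r (Suc 1) f \<Longrightarrow> (\<And>a b. f [a,b] = g [a,b]) \<Longrightarrow> computes r 2 g"
  by (auto simp: computes_def dest!: len2)
lemma c_one1: "computes r (Suc 0) f \<Longrightarrow> (\<And>a. f [a] = g [a]) \<Longrightarrow> computes r 1 g"
  unfolding computes_def by (metis One_nat_def len1)

lemma c_succ1: "computes Succ 1 (\<lambda>xs. Suc (hd xs))"
  using c_succ[of 0] by simp

definition "oneR = Comp Succ [Zero]"
lemma c_one: "computes oneR n (\<lambda>_. 1)"
  unfolding oneR_def by (rule c_eq[OF c_comp1[OF c_succ1 c_zero]]) simp

definition "addR = Prim (Proj 0) (Comp Succ [Proj 0])"
lemma c_add: "computes addR 2 (\<lambda>xs. xs!0 + xs!1)"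
proof -
  have g: "computes (Comp Succ [Proj 0]) (Suc (Suc 1)) (\<lambda>xs. Suc (xs!0))"
    by (rule c_eq[OF c_comp1[OF c_succ1 c_proj]]) auto
  have "computes addR (Suc 1) (\<lambda>xs. rec_nat ((tl xs)!0) (\<lambda>k y. Suc ((y # k # tl xs)!0)) (hd xs))"
    unfolding addR_def by (rule c_prim[OF c_proj g]) simp
  then show ?thesis
    by (rule c_two) (induct_tac a, auto)
qed

definition "multR = Prim Zero (Comp addR [Proj 0, Proj 2])"
lemma c_mult: "computes multR 2 (\<lambda>xs. xs!0 * xs!1)"
proof -
  have g: "computes (Comp addR [Proj 0, Proj 2]) (Suc (Suc 1)) (\<lambda>xs. xs!0 + xs!2)"
    by (rule c_eq[OF c_comp2[OF c_add c_proj c_proj]]) auto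
  have "computes multR (Suc 1) (\<lambda>xs. rec_nat 0 (\<lambda>k y. (y # k # tl xs)!0 + (y # k # tl xs)!2) (hd xs))"
    unfolding multR_def by (rule c_prim[OF c_zero g])
  then show ?thesis
    by (rule c_two) (induct_tac a, auto)
qed

definition "predR = Prim Zero (Proj 1)"
lemma c_pred: "computes predR 1 (\<lambda>xs. xs!0 - 1)"
proof -
  have "computes predR (Suc 0) (\<lambda>xs. rec_nat 0 (\<lambda>k y. (y # k # tl xs)!1) (hd xs))"
    unfolding predR_def by (rule c_prim[OF c_zero c_proj]) simp
  then show ?thesis
    by (rule c_one1) (case_tac a, auto)
qed

definition "monR = Comp (Prim (Proj 0) (Comp predR [Proj 0])) [Proj 1, Proj 0]"
lemma c_mon: "computes monR 2 (\<lambda>xs. xs!0 - xs!1)"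
proof -
  have g: "computes (Comp predR [Proj 0]) (Suc (Suc 1)) (\<lambda>xs. xs!0 - 1)"
    by (rule c_eq[OF c_comp1[OF c_pred c_proj]]) auto
  have p: "computes (Prim (Proj 0) (Comp predR [Proj 0])) (Suc 1) (\<lambda>xs. rec_nat ((tl xs)!0) (\<lambda>k y. (y # k # tl xs)!0 - 1) (hd xs))"
    by (rule c_prim[OF c_proj g]) simp
  have p2: "computes (Prim (Proj 0) (Comp predR [Proj 0])) 2 (\<lambda>xs. xs!1 - xs!0)"
    using p
    by (rule c_two) (induct_tac a, auto)
  show ?thesis unfolding monR_def
    by (rule c_eq[OF c_comp2[OF p2 c_proj c_proj]]) auto
qed


fun Qf :: "nat \<Rightarrow> nat" where
  "Qf 0 = 1"
| "Qf (Suc v) = (if 2 * Qf v \<le> Suc v then 2 * Qf v else Qf v)"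

definition "QgR = (let d = Comp addR [Proj 0, Proj 0]; v1 = Comp Succ [Proj 1];
   c = Comp monR [oneR, Comp monR [d, v1]] in
   Comp addR [Comp multR [c, d], Comp multR [Comp monR [oneR, c], Proj 0]])"

lemma c_Qg: "computes QgR 2 (\<lambda>xs. if 2 * xs!0 \<le> Suc (xs!1) then 2 * xs!0 else xs!0)"
proof -
  have d: "computes (Comp addR [Proj 0, Proj 0]) 2 (\<lambda>xs. xs!0 + xs!0)"
    by (rule c_eq[OF c_comp2[OF c_add c_proj c_proj]]) auto
  have v1: "computes (Comp Succ [Proj 1]) 2 (\<lambda>xs. Suc (xs!1))"
    by (rule c_eq[OF c_comp1[OF c_succ1 c_proj]]) auto
  have dm: "computes (Comp monR [Comp addR [Proj 0, Proj 0], Comp Succ [Proj 1]]) 2 (\<lambda>xs. (xs!0 + xs!0) - Suc (xs!1))"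
    by (rule c_eq[OF c_comp2[OF c_mon d v1]]) auto
  have c: "computes (Comp monR [oneR, Comp monR [Comp addR [Proj 0, Proj 0], Comp Succ [Proj 1]]]) 2
     (\<lambda>xs. 1 - ((xs!0 + xs!0) - Suc (xs!1)))"
    by (rule c_eq[OF c_comp2[OF c_mon c_one dm]]) auto
  have m1: "computes (Comp multR [Comp monR [oneR, Comp monR [Comp addR [Proj 0, Proj 0], Comp Succ [Proj 1]]], Comp addR [Proj 0, Proj 0]]) 2
     (\<lambda>xs. (1 - ((xs!0 + xs!0) - Suc (xs!1))) * (xs!0 + xs!0))"
    by (rule c_eq[OF c_comp2[OF c_mult c d]]) auto
  have c': "computes (Comp monR [oneR, Comp monR [oneR, Comp monR [Comp addR [Proj 0, Proj 0], Comp Succ [Proj 1]]]]) 2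
     (\<lambda>xs. 1 - (1 - ((xs!0 + xs!0) - Suc (xs!1))))"
    by (rule c_eq[OF c_comp2[OF c_mon c_one c]]) auto
  have m2: "computes (Comp multR [Comp monR [oneR, Comp monR [oneR, Comp monR [Comp addR [Proj 0, Proj 0], Comp Succ [Proj 1]]]], Proj 0]) 2
     (\<lambda>xs. (1 - (1 - ((xs!0 + xs!0) - Suc (xs!1)))) * xs!0)"
    by (rule c_eq[OF c_comp2[OF c_mult c' c_proj]]) auto
  show ?thesis unfolding QgR_def Let_def
    by (rule c_eq[OF c_comp2[OF c_add m1 m2]]) auto
qed

definition "QR = Prim oneR QgR"
lemma two_suc: "computes r 2 f \<Longrightarrow> computes r (Suc (Suc 0)) f"
  by (simp add: numeral_2_eq_2)

lemma c_Q: "computes QR 1 (\<lambda>xs. Qf (xs!0))"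
proof -
  have "computes QR (Suc 0) (\<lambda>xs. rec_nat 1 (\<lambda>k y. if 2 * (y#k#tl xs)!0 \<le> Suc ((y#k#tl xs)!1) then 2 * (y#k#tl xs)!0 else (y#k#tl xs)!0) (hd xs))"
    unfolding QR_def by (rule c_prim[OF c_one two_suc[OF c_Qg]])
  then show ?thesis
    by (rule c_one1) (induct_tac a, auto)
qed

definition "aR = Comp monR [Proj 1, Comp QR [Proj 1]]"
definition "HR = Comp addR [aR, Comp multR [Comp QR [Comp Succ [aR]], Proj 0]]"

definition Hf :: "nat \<Rightarrow> nat \<Rightarrow> nat" where
  "Hf q x = (x - Qf x) + Qf (Suc (x - Qf x)) * q"

lemma c_H: "computes HR 2 (\<lambda>xs. Hf (xs!0) (xs!1))"
proof -
  have q1: "computes (Comp QR [Proj 1]) 2 (\<lambda>xs. Qf (xs!1))"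
    by (rule c_eq[OF c_comp1[OF c_Q c_proj]]) auto
  have a: "computes aR 2 (\<lambda>xs. xs!1 - Qf (xs!1))"
    unfolding aR_def by (rule c_eq[OF c_comp2[OF c_mon c_proj q1]]) auto
  have a1: "computes (Comp Succ [aR]) 2 (\<lambda>xs. Suc (xs!1 - Qf (xs!1)))"
    by (rule c_eq[OF c_comp1[OF c_succ1 a]]) auto
  have q2: "computes (Comp QR [Comp Succ [aR]]) 2 (\<lambda>xs. Qf (Suc (xs!1 - Qf (xs!1))))"
    by (rule c_eq[OF c_comp1[OF c_Q a1]]) auto
  have m: "computes (Comp multR [Comp QR [Comp Succ [aR]], Proj 0]) 2 (\<lambda>xs. Qf (Suc (xs!1 - Qf (xs!1))) * xs!0)"
    by (rule c_eq[OF c_comp2[OF c_mult q2 c_proj]]) auto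
  show ?thesis unfolding HR_def
    by (rule c_eq[OF c_comp2[OF c_add a m]]) (auto simp: Hf_def)
qed


lemma Qf_props: "(\<exists>j. Qf v = 2^j) \<and> Qf v \<le> max 1 v \<and> max 1 v < 2 * Qf v"
proof (induction v)
  case 0 then show ?case by (auto intro: exI[of _ 0])
next
  case (Suc v)
  then obtain j where j: "Qf v = 2^j" by auto
  show ?case
  proof (cases "2 * Qf v \<le> Suc v")
    case True
    then show ?thesis using Suc j by (auto intro: exI[of _ "Suc j"])
  next
    case False
    then show ?thesis using Suc j by auto
  qed
qed

lemma Qf_eq: assumes "2^n \<le> e" "e < 2^Suc n" shows "Qf e = 2^n"
proof -
  obtain j where j: "Qf e = 2^j" using Qf_props by blast
  have "1 \<le> e" using assms(1) one_le_power[of "2::nat" n] by linarith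
  then have e1: "max 1 e = e" by simp
  have a: "2^j \<le> e" "e < 2 * 2^j" using Qf_props[of e] j e1 by auto
  have "j \<le> n"
  proof (rule ccontr)
    assume "\<not> j \<le> n" then have "Suc n \<le> j" by simp
    then have "(2::nat)^Suc n \<le> 2^j" by (rule power_increasing) simp
    then show False using a assms by simp
  qed
  moreover have "n \<le> j"
  proof (rule ccontr)
    assume "\<not> n \<le> j" then have "Suc j \<le> n" by simp
    then have "(2::nat)^Suc j \<le> 2^n" by (rule power_increasing) simp
    then show False using a assms by simp
  qed
  ultimately show ?thesis using j by simp
qed

lemma enc_append: "enc (a @ b) = enc a + 2 ^ length a * enc b"
  by (induction a) auto

lemma enc_bounds: "2 ^ length s \<le> enc s + 1 \<and> enc s + 2 \<le> 2 ^ Suc (length s)"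
  by (induction s) auto

lemma enc_rep: "enc (replicate k False) + 1 = 2 ^ k"
  by (induction k) auto

lemma enc_inj: "inj enc"
proof -
  have "\<forall>b. enc a = enc b \<longrightarrow> a = b" for a
  proof (induction a)
    case Nil show ?case
    proof (intro allI impI)
      fix b assume "enc [] = enc b" then show "[] = b" by (cases b) (auto split: if_splits)
    qed
  next
    case (Cons x a)
    show ?case
    proof (intro allI impI)
      fix b assume e: "enc (x # a) = enc b"
      then obtain y b' where b: "b = y # b'" by (cases b) (auto split: if_splits)
      then show "x # a = b" using e Cons by (cases x; cases y) (auto, presburger+)
    qed
  qed
  then show ?thesis by (auto simp: inj_def)
qed

lemma enc_surj: "\<exists>s. enc s = m"
proof (induction m rule: less_induct)
  case (less m)
  show ?case
  proof (cases m)
    case 0 then show ?thesis by (intro exI[of _ "[]"]) simp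
  next
    case (Suc m')
    show ?thesis
    proof (cases "even m'")
      case True
      then obtain k where k: "m' = 2 * k" by auto
      have "k < m" using Suc k by simp
      then obtain s where "enc s = k" using less.IH by blast
      then show ?thesis using Suc k by (intro exI[of _ "False # s"]) simp
    next
      case False
      then obtain k where k: "m' = 2 * k + 1" using oddE by blast
      have "k < m" using Suc k by simp
      then obtain s where "enc s = k" using less.IH by blast
      then show ?thesis using Suc k by (intro exI[of _ "True # s"]) simp
    qed
  qed
qed

lemma enc_inv: "enc (inv enc m) = m"
proof -
  obtain s where s: "enc s = m" using enc_surj by blast
  then show ?thesis using inv_f_f[OF enc_inj, of s] by simp
qed

lemma Hf_enc: assumes "length pre = t"
  shows "Hf (enc q) (enc (pre @ True # replicate k False)) = enc (pre @ q)"
proof -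
  have r: "enc (replicate k False) + 1 = 2^k" by (rule enc_rep)
  have r2: "2 * enc (replicate k False) + 2 = 2 * 2^k" using r by simp
  have ex: "enc (pre @ True # replicate k False) = enc pre + 2^(t+k+1)"
    using r2 assms by (simp add: enc_append power_add mult_ac)
  have b: "2 ^ t \<le> enc pre + 1" "enc pre + 2 \<le> 2 ^ Suc t" using enc_bounds[of pre] assms by auto
  have p: "(2::nat) ^ Suc t \<le> 2 ^ (t + k + 1)" by (rule power_increasing) auto
  have lt: "enc pre < 2 ^ (t+k+1)" using b p by linarith
  have q1: "Qf (enc pre + 2^(t+k+1)) = 2^(t+k+1)"
    by (rule Qf_eq) (use lt in auto)
  have q2: "Qf (Suc (enc pre)) = 2^t"
    by (rule Qf_eq) (use b in auto)
  show ?thesis unfolding Hf_def ex q1 using q2 assms by (simp add: enc_append)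
qed

lemma eval_comp1: "computes h n hf \<Longrightarrow> length xs = n \<Longrightarrow> eval (Comp r [h]) xs z \<longleftrightarrow> eval r [hf xs] z"
proof
  assume c: "computes h n hf" and l: "length xs = n"
  assume "eval (Comp r [h]) xs z"
  then show "eval r [hf xs] z" using c l
    by (auto elim!: evC simp: computes_def list_all2_Cons1)
next
  assume c: "computes h n hf" and l: "length xs = n"
  assume "eval r [hf xs] z"
  then show "eval (Comp r [h]) xs z" using c l
    by (intro eval_comp[where ys="[hf xs]"]) (auto simp: computes_def)
qed

definition Fm :: "(bool list \<Rightarrow> bool list option) \<Rightarrow> bool list \<Rightarrow> bool list \<Rightarrow> bool list option" where
  "Fm U q x = U (inv enc (Hf (enc q) (enc x)))"

lemma Fm_comp: "computable1 U \<Longrightarrow> computable2 (Fm U)"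
proof -
  assume "computable1 U"
  then obtain r where r: "\<forall>p z. eval r [enc p] (enc z) \<longleftrightarrow> U p = Some z" by (auto simp: computable1_def)
  have "eval (Comp r [HR]) [enc p, enc y] (enc z) \<longleftrightarrow> Fm U p y = Some z" for p y z
  proof -
    have "eval (Comp r [HR]) [enc p, enc y] (enc z) \<longleftrightarrow> eval r [Hf (enc p) (enc y)] (enc z)"
      using eval_comp1[OF c_H, of "[enc p, enc y]"] by simp
    also have "\<dots> \<longleftrightarrow> eval r [enc (inv enc (Hf (enc p) (enc y)))] (enc z)" by (simp add: enc_inv)
    also have "\<dots> \<longleftrightarrow> Fm U p y = Some z" using r by (simp add: Fm_def)
    finally show ?thesis .
  qed
  then show ?thesis unfolding computable2_def by blast
qed

lemma Fm_app: "length pre = t \<Longrightarrow> Fm U q (pre @ True # replicate k False) = U (pre @ q)"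
  unfolding Fm_def Hf_enc by (simp add: enc_inj)


lemma bl_eq: "{x::bool list. length x = n} = {xs. set xs \<subseteq> UNIV \<and> length xs = n}" by simp

lemma card_len: "card {x::bool list. length x = n} = 2^n"
  using card_lists_length_eq[of "UNIV::bool set" n] by simp

lemma fin_len: "finite {x::bool list. length x = n}"
  unfolding bl_eq by (rule finite_lists_length_eq) simp

lemma fin_lt: "finite {p::bool list. length p < t}"
proof -
  have "{p::bool list. length p < t} \<subseteq> {xs. set xs \<subseteq> UNIV \<and> length xs \<le> t}" by auto
  then show ?thesis by (rule finite_subset) (rule finite_lists_length_le, simp)
qed

lemma card_lt: "card {p::bool list. length p < t} + 1 \<le> 2^t"
proof (induction t)
  case 0 then show ?case by simp
next
  case (Suc t)
  have "{p::bool list. length p < Suc t} = {p. length p < t} \<union> {p. length p = t}" by auto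
  then have "card {p::bool list. length p < Suc t} \<le> card {p::bool list. length p < t} + card {p::bool list. length p = t}"
    by (simp add: card_Un_le)
  then show ?case using Suc card_len[of t] by simp
qed

lemma U_all: assumes "universal1 U" shows "\<exists>q. U q = Some x"
proof -
  have "computable1 (\<lambda>p. Some p)"
    unfolding computable1_def
  proof (intro exI[of _ "Proj 0"] allI)
    fix p z
    show "eval (Proj 0) [enc p] (enc z) = (Some p = Some z)"
      using enc_inj eval_proj[of 0 "[enc p]"] by (auto elim: evP simp: inj_eq)
  qed
  then show ?thesis using assms unfolding universal1_def by blast
qed

theorem theorem6:
  fixes U :: "bool list \<Rightarrow> bool list option"
    and V :: "bool list \<Rightarrow> bool list \<Rightarrow> bool list option"
  assumes "universal1 U" and "universal2 V"
  shows "\<exists>N. \<forall>n\<ge>N. \<forall>\<alpha>::nat. \<exists>B. B \<subseteq> {x. length x = n} \<and>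
           card B \<le> (2 * n ^ 13 + n ^ 12) * 2 ^ \<alpha> \<and>
           (\<forall>y. length y = n \<longrightarrow> (\<exists>x\<in>B. dependent U V \<alpha> y x))"
proof -
  have "computable2 (Fm U)" using assms(1) Fm_comp unfolding universal1_def by blast
  then obtain c where c: "\<And>p y x. Fm U p y = Some x \<Longrightarrow> \<exists>q. V q y = Some x \<and> length q \<le> length p + c"
    using assms(2) unfolding universal2_def by blast
  show ?thesis
  proof (intro exI[of _ "2^(c+1)"] allI impI)
    fix n \<alpha> :: nat assume nN: "2^(c+1) \<le> n"
    have "1 \<le> n" using nN one_le_power[of "2::nat" "c+1"] by linarith
    then have "n \<le> n^12" by (simp add: self_le_power)
    then have cn: "2^(c+1) \<le> n^12" using nN by linarith
    have bound: "2^(\<alpha>+c+1) \<le> (2 * n ^ 13 + n ^ 12) * 2 ^ \<alpha>"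
    proof -
      have "(2::nat)^(\<alpha>+c+1) = 2^(c+1) * 2^\<alpha>" by (simp add: power_add)
      also have "\<dots> \<le> n^12 * 2^\<alpha>" using cn by simp
      also have "\<dots> \<le> (2 * n ^ 13 + n ^ 12) * 2 ^ \<alpha>" by simp
      finally show ?thesis .
    qed
    show "\<exists>B. B \<subseteq> {x. length x = n} \<and> card B \<le> (2 * n ^ 13 + n ^ 12) * 2 ^ \<alpha> \<and>
           (\<forall>y. length y = n \<longrightarrow> (\<exists>x\<in>B. dependent U V \<alpha> y x))"
    proof (cases "n \<le> \<alpha> + c")
      case True
      have "card {x::bool list. length x = n} \<le> 2^(\<alpha>+c+1)"
        unfolding card_len by (rule power_increasing) (use True in auto)
      then show ?thesis using bound
        by (intro exI[of _ "{x. length x = n}"]) (auto simp: dependent_def)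
    next
      case False
      define t where "t = \<alpha> + c"
      define k where "k = n - t - 1"
      have ntk: "n = t + 1 + k" using False unfolding t_def k_def by simp
      define B1 where "B1 = (\<lambda>pre. pre @ True # replicate k False) ` {pre. length pre = t}"
      define B2 where "B2 = {y. length y = n \<and> KC U y < t}"
      have B1s: "B1 \<subseteq> {x. length x = n}" unfolding B1_def using ntk by auto
      have cB1: "card B1 \<le> 2^t" unfolding B1_def
        using card_image_le[OF fin_len, of "\<lambda>pre. pre @ True # replicate k False" t] card_len[of t] by simp
      have B2s: "B2 \<subseteq> (\<lambda>p. the (U p)) ` {p. length p < t}"
      proof
        fix y assume "y \<in> B2"
        then have kc: "KC U y < t" unfolding B2_def by simp
        have ex: "\<exists>k p. length p = k \<and> U p = Some y" using U_all[OF assms(1)] by blast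
        obtain p where p: "length p = KC U y" "U p = Some y"
          using LeastI_ex[OF ex] unfolding KC_def by blast
        then show "y \<in> (\<lambda>p. the (U p)) ` {p. length p < t}" using kc by (intro image_eqI[of _ _ p]) auto
      qed
      have cB2: "card B2 \<le> 2^t"
      proof -
        have "card B2 \<le> card ((\<lambda>p. the (U p)) ` {p. length p < t})"
          by (rule card_mono[OF _ B2s]) (simp add: fin_lt)
        also have "\<dots> \<le> card {p::bool list. length p < t}" by (rule card_image_le[OF fin_lt])
        also have "\<dots> \<le> 2^t" using card_lt[of t] by simp
        finally show ?thesis .
      qed
      have "card (B1 \<union> B2) \<le> 2^t + 2^t" using card_Un_le[of B1 B2] cB1 cB2 by simp
      also have "\<dots> = 2^(\<alpha>+c+1)" unfolding t_def by simp
      finally have cB: "card (B1 \<union> B2) \<le> (2 * n ^ 13 + n ^ 12) * 2 ^ \<alpha>" using bound by simp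
      have dep: "\<exists>x\<in>B1 \<union> B2. dependent U V \<alpha> y x" if ly: "length y = n" for y
      proof (cases "KC U y < t")
        case True
        then have "y \<in> B2" unfolding B2_def using ly by simp
        then show ?thesis by (auto simp: dependent_def)
      next
        case False
        have ex: "\<exists>k p. length p = k \<and> U p = Some y" using U_all[OF assms(1)] by blast
        obtain p where p: "length p = KC U y" "U p = Some y"
          using LeastI_ex[OF ex] unfolding KC_def by blast
        define pre where "pre = take t p"
        define q where "q = drop t p"
        have lpre: "length pre = t" unfolding pre_def using p False by simp
        have pq: "pre @ q = p" unfolding pre_def q_def by simp
        define x where "x = pre @ True # replicate k False"
        have xB: "x \<in> B1" unfolding x_def B1_def using lpre by auto
        have "Fm U q x = Some y" unfolding x_def Fm_app[OF lpre] pq using p by simp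
        then obtain q' where q': "V q' x = Some y" "length q' \<le> length q + c" using c by blast
        have "KCc V y x \<le> length q'" unfolding KCc_def by (rule Least_le) (use q' in blast)
        moreover have "length q = KC U y - t" unfolding q_def using p by simp
        ultimately have "int (KC U y) - int (KCc V y x) \<ge> int \<alpha>" using q' False unfolding t_def by linarith
        then show ?thesis using xB unfolding dependent_def by blast
      qed
      have B2l: "B2 \<subseteq> {x. length x = n}" unfolding B2_def by auto
      show ?thesis using B1s B2l cB dep
        by (intro exI[of _ "B1 \<union> B2"]) auto
    qed
  qed
qed

end
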